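(* Let $\mathscr T=(V,\mathcal E)$ be the directed Cartesian product of locally finite, rooted directed trees $\mathscr T_1,\dots,\mathscr T_d$, and let $S_{\boldsymbol\lambda}=(S_1,\dots,S_d)$ be a commuting multishift on $\mathscr T$. Let $E=\bigcap_{j=1}^d\ker S_j^*$ be the joint kernel of $S_{\boldsymbol\lambda}^*$. Then $S_{\boldsymbol\lambda}$ possesses the wandering subspace property, i.e. $$l^2(V)=\bigvee_{\alpha\in\mathbb N^d}S_{\boldsymbol\lambda}^{\alpha}E ,$$ where $\bigvee$ denotes the closed linear span.
   Context: A directed tree is a directed graph $(V,\mathcal E)$ ($\mathcal E\subseteq V\times V$ with no loops) that has no circuits, is connected (any two distinct vertices are joined by a path when orientation is ignored), and in which each vertex having an incoming edge has exactly one (its parent $\mathsf{par}(v)$). It is rooted if it has a (unique) vertex $\mathsf{root}$ with no incoming edge. $\mathsf{Chi}(u)=\{v:(u,v)\in\mathcal E\}$. The tree is locally finite if each $\mathsf{Chi}(u)$ is finite. Standing assumption: all directed trees are leafless (every $\mathsf{Chi}(u)\ne\emptyset$). Given rooted directed trees $\mathscr T_j=(V_j,\mathcal E_j)$ with roots $\mathsf{root}_j$, their directed Cartesian product is $\mathscr T=(V,\mathcal E)$ with $V=V_1\times\dots\times V_d$ (assumed countably infinite) and $(v,w)\in\mathcal E$ iff for some $k$, $(v_k,w_k)\in\mathcal E_k$ and $w_j=v_j$ for $j\ne k$. Put $\mathsf{root}=(\mathsf{root}_1,\dots,\mathsf{root}_d)$, $V^\circ=V\setminus\{\mathsf{root}\}$,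 $\mathsf{Chi}_j(v)=\{w\in V: w_j\in\mathsf{Chi}(v_j),\ w_k=v_k\ (k\neq j)\}$, and for $v_j\ne\mathsf{root}_j$ let $\mathsf{par}_j(v)$ be $v$ with $v_j$ replaced by $\mathsf{par}(v_j)$. $l^2(V)$ has orthonormal basis $\{e_v\}_{v\in V}$. Given positive numbers $\{\lambda^{(j)}_v: v\in V^\circ,1\le j\le d\}$, the multishift $S_{\boldsymbol\lambda}=(S_1,\dots,S_d)$ is $(S_jf)(v)=\lambda^{(j)}_vf(\mathsf{par}_j(v))$ if $v_j\ne\mathsf{root}_j$ and $0$ otherwise; each $S_j$ is assumed bounded on $l^2(V)$, so $S_je_v=\sum_{w\in\mathsf{Chi}_j(v)}\lambda^{(j)}_we_w$. Commuting means $S_iS_j=S_jS_i$ for all $i,j$; $S^\alpha_{\boldsymbol\lambda}=S_1^{\alpha_1}\cdots S_d^{\alpha_d}$. *)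

theory Defs
  imports "HOL-Analysis.Analysis"
begin

definition directed_tree :: "'a set \<Rightarrow> ('a \<times> 'a) set \<Rightarrow> bool" where
  "directed_tree V E \<longleftrightarrow>
     E \<subseteq> V \<times> V \<and>
     (\<forall>v. (v, v) \<notin> E) \<and>
     (\<forall>v. (v, v) \<notin> E\<^sup>+) \<and>
     (\<forall>v\<in>V. \<forall>w\<in>V. v \<noteq> w \<longrightarrow> (v, w) \<in> (E \<union> E\<inverse>)\<^sup>*) \<and>
     (\<forall>v. (\<exists>u. (u, v) \<in> E) \<longrightarrow> (\<exists>!u. (u, v) \<in> E))"

definition has_root :: "'a set \<Rightarrow> ('a \<times> 'a) set \<Rightarrow> bool" where
  "has_root V E \<longleftrightarrow> (\<exists>r\<in>V. \<not> (\<exists>u. (u, r) \<in> E))"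

definition tree_root :: "'a set \<Rightarrow> ('a \<times> 'a) set \<Rightarrow> 'a" where
  "tree_root V E = (THE r. r \<in> V \<and> \<not> (\<exists>u. (u, r) \<in> E))"

definition Chi :: "('a \<times> 'a) set \<Rightarrow> 'a \<Rightarrow> 'a set" where
  "Chi E u = {v. (u, v) \<in> E}"

definition par :: "('a \<times> 'a) set \<Rightarrow> 'a \<Rightarrow> 'a" where
  "par E v = (THE u. (u, v) \<in> E)"

definition locally_finite :: "'a set \<Rightarrow> ('a \<times> 'a) set \<Rightarrow> bool" where
  "locally_finite V E \<longleftrightarrow> (\<forall>u\<in>V. finite (Chi E u))"

definition leafless :: "'a set \<Rightarrow> ('a \<times> 'a) set \<Rightarrow> bool" where
  "leafless V E \<longleftrightarrow> (\<forall>u\<in>V. Chi E u \<noteq> {})"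

definition prod_vertices :: "nat \<Rightarrow> (nat \<Rightarrow> 'a set) \<Rightarrow> (nat \<Rightarrow> 'a) set" where
  "prod_vertices d Vs = {v. (\<forall>j<d. v j \<in> Vs j) \<and> (\<forall>j\<ge>d. v j = undefined)}"

definition prod_root :: "nat \<Rightarrow> (nat \<Rightarrow> 'a set) \<Rightarrow> (nat \<Rightarrow> ('a \<times> 'a) set) \<Rightarrow> nat \<Rightarrow> 'a" where
  "prod_root d Vs Es = (\<lambda>j. if j < d then tree_root (Vs j) (Es j) else undefined)"

definition par_j :: "(nat \<Rightarrow> ('a \<times> 'a) set) \<Rightarrow> nat \<Rightarrow> (nat \<Rightarrow> 'a) \<Rightarrow> (nat \<Rightarrow> 'a)" where
  "par_j Es j v = v(j := par (Es j) (v j))"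

definition l2 :: "'v set \<Rightarrow> ('v \<Rightarrow> complex) set" where
  "l2 V = {f. (\<forall>v. v \<notin> V \<longrightarrow> f v = 0) \<and> (\<lambda>v. (cmod (f v))\<^sup>2) summable_on V}"

definition l2inner :: "'v set \<Rightarrow> ('v \<Rightarrow> complex) \<Rightarrow> ('v \<Rightarrow> complex) \<Rightarrow> complex" where
  "l2inner V f g = (\<Sum>\<^sub>\<infinity>v\<in>V. f v * cnj (g v))"

definition l2norm :: "'v set \<Rightarrow> ('v \<Rightarrow> complex) \<Rightarrow> real" where
  "l2norm V f = sqrt (\<Sum>\<^sub>\<infinity>v\<in>V. (cmod (f v))\<^sup>2)"

definition bounded_op :: "'v set \<Rightarrow> (('v \<Rightarrow> complex) \<Rightarrow> ('v \<Rightarrow> complex)) \<Rightarrow> bool" where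
  "bounded_op V T \<longleftrightarrow> (\<forall>f\<in>l2 V. T f \<in> l2 V) \<and>
     (\<forall>f\<in>l2 V. \<forall>g\<in>l2 V. \<forall>c. T (\<lambda>v. f v + c * g v) = (\<lambda>v. T f v + c * T g v)) \<and>
     (\<exists>C. \<forall>f\<in>l2 V. l2norm V (T f) \<le> C * l2norm V f)"

definition adj :: "'v set \<Rightarrow> (('v \<Rightarrow> complex) \<Rightarrow> ('v \<Rightarrow> complex)) \<Rightarrow> ('v \<Rightarrow> complex) \<Rightarrow> ('v \<Rightarrow> complex)" where
  "adj V T f = (THE h. h \<in> l2 V \<and> (\<forall>g\<in>l2 V. l2inner V (T g) f = l2inner V g h))"

definition lin_span :: "('v \<Rightarrow> complex) set \<Rightarrow> ('v \<Rightarrow> complex) set" where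
  "lin_span A = {g. \<exists>n (c :: nat \<Rightarrow> complex) h. (\<forall>i<n. h i \<in> A) \<and>
                      g = (\<lambda>v. \<Sum>i<n. c i * h i v)}"

definition closed_span :: "'v set \<Rightarrow> ('v \<Rightarrow> complex) set \<Rightarrow> ('v \<Rightarrow> complex) set" where
  "closed_span V A = {f \<in> l2 V. \<forall>e>0. \<exists>g\<in>lin_span A. l2norm V (\<lambda>v. f v - g v) < e}"

definition multishift ::
  "nat \<Rightarrow> (nat \<Rightarrow> 'a set) \<Rightarrow> (nat \<Rightarrow> ('a \<times> 'a) set) \<Rightarrow> (nat \<Rightarrow> (nat \<Rightarrow> 'a) \<Rightarrow> real)
     \<Rightarrow> nat \<Rightarrow> ((nat \<Rightarrow> 'a) \<Rightarrow> complex) \<Rightarrow> ((nat \<Rightarrow> 'a) \<Rightarrow> complex)" where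
  "multishift d Vs Es lam j f = (\<lambda>v.
     if v \<in> prod_vertices d Vs \<and> v j \<noteq> tree_root (Vs j) (Es j)
     then complex_of_real (lam j v) * f (par_j Es j v) else 0)"

fun mpow :: "(nat \<Rightarrow> 'f \<Rightarrow> 'f) \<Rightarrow> (nat \<Rightarrow> nat) \<Rightarrow> nat \<Rightarrow> 'f \<Rightarrow> 'f" where
  "mpow S \<alpha> 0 = id"
| "mpow S \<alpha> (Suc k) = mpow S \<alpha> k \<circ> (S k ^^ \<alpha> k)"

definition joint_adj_kernel :: "'v set \<Rightarrow> nat \<Rightarrow> (nat \<Rightarrow> ('v \<Rightarrow> complex) \<Rightarrow> ('v \<Rightarrow> complex)) \<Rightarrow> ('v \<Rightarrow> complex) set" where
  "joint_adj_kernel V d S = {f \<in> l2 V. \<forall>j<d. adj V (S j) f = (\<lambda>_. 0)}"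

end

theory Submission
  imports Defs
begin


inductive_set sp :: "('v \<Rightarrow> complex) set \<Rightarrow> ('v \<Rightarrow> complex) set" for A where
  sp0: "(\<lambda>_. 0) \<in> sp A"
| spI: "a \<in> A \<Longrightarrow> f \<in> sp A \<Longrightarrow> (\<lambda>v. c * a v + f v) \<in> sp A"

lemma sp_add: "f \<in> sp A \<Longrightarrow> g \<in> sp A \<Longrightarrow> (\<lambda>v. f v + g v) \<in> sp A"
proof (induction f rule: sp.induct)
  case sp0 then show ?case by simp
next
  case (spI a f c)
  have "(\<lambda>v. c * a v + f v + g v) = (\<lambda>v. c * a v + (f v + g v))" by (simp add: algebra_simps)
  then show ?case using spI sp.spI by metis
qed

lemma sp_scale: "f \<in> sp A \<Longrightarrow> (\<lambda>v. k * f v) \<in> sp A"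
proof (induction f rule: sp.induct)
  case sp0 then show ?case by (simp add: sp.sp0)
next
  case (spI a f c)
  have "(\<lambda>v. k * (c * a v + f v)) = (\<lambda>v. (k*c) * a v + k * f v)" by (simp add: algebra_simps)
  then show ?case using spI sp.spI by metis
qed

lemma sp_base: "a \<in> A \<Longrightarrow> a \<in> sp A"
  using sp.spI[OF _ sp.sp0, of a A 1] by simp

lemma sp_sub: "f \<in> sp A \<Longrightarrow> g \<in> sp A \<Longrightarrow> (\<lambda>v. f v - g v) \<in> sp A"
  using sp_add[OF _ sp_scale[of g A "-1"], of f] by simp

lemma sp_sp: assumes "A \<subseteq> sp B" "f \<in> sp A" shows "f \<in> sp B"
  using assms(2)
proof (induction f rule: sp.induct)
  case sp0 then show ?case by (simp add: sp.sp0)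
next
  case (spI a f c) then show ?case using sp_add sp_scale assms(1) by (metis (no_types) subsetD)
qed

lemma sp_mono: "A \<subseteq> B \<Longrightarrow> f \<in> sp A \<Longrightarrow> f \<in> sp B"
  using sp_sp[of A B f] sp_base by blast

lemma sp_sum: "finite F \<Longrightarrow> (\<forall>i\<in>F. h i \<in> sp A) \<Longrightarrow> (\<lambda>v. \<Sum>i\<in>F. c i * h i v) \<in> sp A"
proof (induction F rule: finite_induct)
  case empty then show ?case by (simp add: sp.sp0)
next
  case (insert x F)
  then have "(\<lambda>v. c x * h x v + (\<Sum>i\<in>F. c i * h i v)) \<in> sp A"
    using sp_add sp_scale by (metis insert_iff)
  then show ?case using insert by simp
qed

lemma sp_lin: "f \<in> sp A \<Longrightarrow> f \<in> lin_span A"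
proof (induction f rule: sp.induct)
  case sp0 then show ?case unfolding lin_span_def by (rule CollectI, rule exI[of _ 0]) auto
next
  case (spI a f c)
  from spI.IH obtain n :: nat and cc h where h: "\<forall>i<n. h i \<in> A" "f = (\<lambda>v. \<Sum>i<n. cc i * h i v)"
    unfolding lin_span_def mem_Collect_eq by blast
  have "(\<lambda>v. c * a v + f v) = (\<lambda>v. \<Sum>i<Suc n. (cc(n := c)) i * (h(n := a)) i v)"
    using h(2) by (auto intro!: ext sum.cong)
  moreover have "\<forall>i<Suc n. (h(n := a)) i \<in> A" using h(1) spI(1) by auto
  ultimately show ?case unfolding lin_span_def by blast
qed

lemma sp_support: assumes "\<forall>a\<in>A. \<forall>y. y \<notin> L \<longrightarrow> a y = 0" "f \<in> sp A" "y \<notin> L" shows "f y = 0"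
  using assms(2) by (induction f rule: sp.induct) (use assms in auto)

definition ip :: "'v set \<Rightarrow> ('v \<Rightarrow> complex) \<Rightarrow> ('v \<Rightarrow> complex) \<Rightarrow> complex" where
  "ip L f g = (\<Sum>v\<in>L. f v * cnj (g v))"

lemma ip_sub_left: "ip L (\<lambda>v. a v - b v) g = ip L a g - ip L b g"
  unfolding ip_def by (simp add: sum_subtractf algebra_simps)
lemma ip_scale_left: "ip L (\<lambda>v. c * a v) g = c * ip L a g"
  unfolding ip_def by (simp add: sum_distrib_left algebra_simps)
lemma ip_add_right: "ip L f (\<lambda>v. a v + b v) = ip L f a + ip L f b"
  unfolding ip_def by (simp add: sum.distrib algebra_simps)
lemma ip_scale_right: "ip L f (\<lambda>v. c * a v) = cnj c * ip L f a"
  unfolding ip_def by (simp add: sum_distrib_left algebra_simps)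
lemma ip_cnj: "ip L g f = cnj (ip L f g)"
  unfolding ip_def by (simp add: algebra_simps)
lemma ip_zero_right: "ip L f (\<lambda>_. 0) = 0"
  unfolding ip_def by simp

lemma ip_self_zero:
  assumes "finite L" "ip L s s = 0" "v \<in> L" shows "s v = 0"
proof -
  have "(\<Sum>v\<in>L. s v * cnj (s v)) = of_real (\<Sum>v\<in>L. (cmod (s v))\<^sup>2)"
    by (simp only: of_real_sum complex_norm_square)
  with assms(2) have "(\<Sum>v\<in>L. (cmod (s v))\<^sup>2) = 0" unfolding ip_def by (metis of_real_eq_0_iff)
  with assms(1,3) have "(cmod (s v))\<^sup>2 = 0" by (simp add: sum_nonneg_eq_0_iff)
  then show ?thesis by simp
qed

lemma ip_sp_right: assumes "\<forall>w\<in>W. ip L f w = 0" "g \<in> sp W" shows "ip L f g = 0"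
  using assms(2) assms(1) by (induction g rule: sp.induct) (auto simp: ip_add_right ip_scale_right ip_zero_right)

lemma gs:
  assumes "finite L"
  shows "\<forall>x. \<exists>w\<in>sp (set ws). \<forall>w'\<in>set ws. ip L (\<lambda>v. x v - w v) w' = 0"
proof (induction ws)
  case Nil then show ?case by (auto intro: sp.sp0)
next
  case (Cons a ws)
  show ?case
  proof
    fix x
    obtain w1 where w1: "w1 \<in> sp (set ws)" "\<forall>w'\<in>set ws. ip L (\<lambda>v. x v - w1 v) w' = 0"
      using Cons.IH by blast
    obtain b where b: "b \<in> sp (set ws)" "\<forall>w'\<in>set ws. ip L (\<lambda>v. a v - b v) w' = 0"
      using Cons.IH by blast
    define r where "r = (\<lambda>v. x v - w1 v)"
    define s where "s = (\<lambda>v. a v - b v)"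
    define c where "c = ip L r s / ip L s s"
    define w where "w = (\<lambda>v. w1 v + c * s v)"
    have sub: "set ws \<subseteq> set (a # ws)" by auto
    have "w \<in> sp (set (a # ws))"
      unfolding w_def s_def
      by (intro sp_add sp_scale sp_sub sp_base sp_mono[OF sub] w1 b) simp
    moreover have eq: "(\<lambda>v. x v - w v) = (\<lambda>v. r v - c * s v)"
      unfolding w_def r_def by (auto simp: algebra_simps)
    have orth: "\<forall>w'\<in>set ws. ip L (\<lambda>v. r v - c * s v) w' = 0"
      using w1(2) b(2) by (simp add: ip_sub_left ip_scale_left r_def s_def)
    have "ip L (\<lambda>v. r v - c * s v) a = 0"
    proof -
      have aeq: "a = (\<lambda>v. b v + s v)" unfolding s_def by simp
      have "ip L (\<lambda>v. r v - c * s v) a = ip L (\<lambda>v. r v - c * s v) b + ip L (\<lambda>v. r v - c * s v) s"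
        by (subst aeq) (simp add: ip_add_right)
      also have "ip L (\<lambda>v. r v - c * s v) b = 0" using ip_sp_right[OF orth b(1)] .
      also have "ip L (\<lambda>v. r v - c * s v) s = ip L r s - c * ip L s s"
        by (simp add: ip_sub_left ip_scale_left)
      also have "\<dots> = 0"
      proof (cases "ip L s s = 0")
        case True
        then have "\<forall>v\<in>L. s v = 0" using ip_self_zero[OF assms] by blast
        then have "ip L r s = 0" unfolding ip_def by simp
        with True show ?thesis by simp
      next
        case False then show ?thesis unfolding c_def by simp
      qed
      finally show ?thesis by simp
    qed
    ultimately show "\<exists>w\<in>sp (set (a # ws)). \<forall>w'\<in>set (a # ws). ip L (\<lambda>v. x v - w v) w' = 0"
      using orth eq by (metis set_ConsD)
  qed
qed




lemma root_path:
  assumes up: "\<forall>v. (\<exists>u. (u,v)\<in>E) \<longrightarrow> (\<exists>!u. (u,v)\<in>E)" and noin: "\<not>(\<exists>u. (u,r)\<in>E)"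
    and "(r,w) \<in> (E \<union> E\<inverse>)\<^sup>*"
  shows "(r,w) \<in> E\<^sup>*"
  using assms(3)
proof (induction rule: rtrancl_induct)
  case base then show ?case by simp
next
  case (step y w)
  from step.hyps(2) show ?case
  proof
    assume "(y,w)\<in>E" with step.IH show ?thesis by (rule rtrancl_into_rtrancl)
  next
    assume "(y,w) \<in> E\<inverse>" hence wy: "(w,y)\<in>E" by simp
    show ?thesis
    proof (cases "y = r")
      case True with wy noin show ?thesis by auto
    next
      case False
      with step.IH obtain z where z: "(r,z)\<in>E\<^sup>*" "(z,y)\<in>E" by (metis rtranclE)
      with wy up have "z = w" by blast
      with z show ?thesis by simp
    qed
  qed
qed

lemma dt_up: "directed_tree V E \<Longrightarrow> \<forall>v. (\<exists>u. (u,v)\<in>E) \<longrightarrow> (\<exists>!u. (u,v)\<in>E)"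
  unfolding directed_tree_def by (elim conjE) assumption
lemma dt_conn: "directed_tree V E \<Longrightarrow> \<forall>v\<in>V. \<forall>w\<in>V. v \<noteq> w \<longrightarrow> (v, w) \<in> (E \<union> E\<inverse>)\<^sup>*"
  unfolding directed_tree_def by (elim conjE) assumption
lemma dt_sub: "directed_tree V E \<Longrightarrow> E \<subseteq> V \<times> V"
  unfolding directed_tree_def by (elim conjE) assumption

lemma tree_basic:
  assumes "directed_tree V E" "has_root V E"
  shows "tree_root V E \<in> V" "\<not>(\<exists>u. (u, tree_root V E)\<in>E)" "\<And>w. w \<in> V \<Longrightarrow> (tree_root V E, w) \<in> E\<^sup>*"
proof -
  note up = dt_up[OF assms(1)]
  note conn = dt_conn[OF assms(1)]
  obtain r0 where r0: "r0 \<in> V" "\<not>(\<exists>u. (u,r0)\<in>E)" using assms(2) unfolding has_root_def by blast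
  have reach: "(r0, w) \<in> E\<^sup>*" if "w \<in> V" for w
  proof (cases "w = r0")
    case False
    then have "(r0, w) \<in> (E \<union> E\<inverse>)\<^sup>*" using conn r0(1) that by simp
    then show ?thesis by (rule root_path[OF up r0(2)])
  qed simp
  have uniq: "r = r0" if "r \<in> V" "\<not>(\<exists>u. (u,r)\<in>E)" for r
  proof (rule ccontr)
    assume ne: "r \<noteq> r0"
    from reach[OF that(1)] show False
    proof (cases rule: rtranclE)
      case base with ne show False by simp
    next
      case (step z) with that(2) show False by blast
    qed
  qed
  have tr: "tree_root V E = r0"
    unfolding tree_root_def
  proof (rule the_equality)
    show "r0 \<in> V \<and> \<not> (\<exists>u. (u, r0) \<in> E)" using r0 by blast
  next
    fix r assume "r \<in> V \<and> \<not> (\<exists>u. (u, r) \<in> E)"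
    then show "r = r0" using uniq by blast
  qed
  show "tree_root V E \<in> V" "\<not>(\<exists>u. (u, tree_root V E)\<in>E)" unfolding tr using r0 by blast+
  show "\<And>w. w \<in> V \<Longrightarrow> (tree_root V E, w) \<in> E\<^sup>*" unfolding tr using reach by blast
qed

definition dep :: "'a set \<Rightarrow> ('a \<times> 'a) set \<Rightarrow> 'a \<Rightarrow> nat" where
  "dep V E w = (LEAST n. (tree_root V E, w) \<in> E ^^ n)"

lemma par_eq:
  assumes up: "\<forall>v. (\<exists>u. (u,v)\<in>E) \<longrightarrow> (\<exists>!u. (u,v)\<in>E)" and "(u,w) \<in> E"
  shows "par E w = u"
  unfolding par_def by (rule the_equality) (use assms in blast)+

lemma path_unique:
  assumes up: "\<forall>v. (\<exists>u. (u,v)\<in>E) \<longrightarrow> (\<exists>!u. (u,v)\<in>E)" and noin: "\<not>(\<exists>u. (u,r)\<in>E)"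
  shows "(r,w) \<in> E ^^ n \<Longrightarrow> (r,w) \<in> E ^^ m \<Longrightarrow> n = m"
proof (induction n arbitrary: w m)
  case 0
  then have "w = r" by simp
  show ?case
  proof (cases m)
    case (Suc m') with 0(2) \<open>w = r\<close> noin show ?thesis by (metis relpow_Suc_E)
  qed simp
next
  case (Suc n)
  from Suc.prems(1) obtain y where y: "(r,y) \<in> E ^^ n" "(y,w) \<in> E" by (metis relpow_Suc_E)
  show ?case
  proof (cases m)
    case 0 with Suc.prems(2) y(2) noin show ?thesis by simp
  next
    case (Suc m')
    with Suc.prems(2) obtain y' where y': "(r,y') \<in> E ^^ m'" "(y',w) \<in> E" by (metis relpow_Suc_E)
    from y(2) y'(2) up have "y = y'" by blast
    with Suc.IH[OF y(1)] y'(1) Suc show ?thesis by simp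
  qed
qed

lemma tree_dep:
  assumes "directed_tree V E" "has_root V E" "w \<in> V"
  shows "(tree_root V E, w) \<in> E ^^ dep V E w"
    "\<And>n. (tree_root V E, w) \<in> E ^^ n \<Longrightarrow> dep V E w = n"
proof -
  have up: "\<forall>v. (\<exists>u. (u,v)\<in>E) \<longrightarrow> (\<exists>!u. (u,v)\<in>E)"
    using dt_up[OF assms(1)] by auto
  note tb = tree_basic[OF assms(1,2)]
  obtain n where n: "(tree_root V E, w) \<in> E ^^ n" using tb(3)[OF assms(3)] rtrancl_power by blast
  show "(tree_root V E, w) \<in> E ^^ dep V E w" unfolding dep_def by (rule LeastI, rule n)
  then show "\<And>n. (tree_root V E, w) \<in> E ^^ n \<Longrightarrow> dep V E w = n"
    using path_unique[OF up tb(2)] by blast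
qed

lemma tree_par:
  assumes "directed_tree V E" "has_root V E" "w \<in> V" "w \<noteq> tree_root V E"
  shows "par E w \<in> V" "(par E w, w) \<in> E" "dep V E w = Suc (dep V E (par E w))"
proof -
  have up: "\<forall>v. (\<exists>u. (u,v)\<in>E) \<longrightarrow> (\<exists>!u. (u,v)\<in>E)" and sub: "E \<subseteq> V \<times> V"
    using dt_up[OF assms(1)] dt_sub[OF assms(1)] by auto
  note td = tree_dep[OF assms(1,2,3)]
  obtain m where m: "dep V E w = Suc m" using td(1) assms(4)
    by (metis gr0_implies_Suc neq0_conv relpow_0_E)
  with td(1) obtain y where y: "(tree_root V E, y) \<in> E ^^ m" "(y,w) \<in> E" by (metis relpow_Suc_E)
  have py: "par E w = y" by (rule par_eq[OF up y(2)])
  show "par E w \<in> V" "(par E w, w) \<in> E" using py y sub by auto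
  have "dep V E y = m" using tree_dep(2)[OF assms(1,2) _ y(1)] y(2) sub by auto
  with m py show "dep V E w = Suc (dep V E (par E w))" by simp
qed

lemma tree_finite_levels:
  assumes "directed_tree V E" "has_root V E" "locally_finite V E"
  shows "finite {w \<in> V. dep V E w \<le> n}"
proof (induction n)
  case 0
  have "{w \<in> V. dep V E w \<le> 0} \<subseteq> {tree_root V E}"
    using tree_dep(1)[OF assms(1,2)] by fastforce
  then show ?case using finite_subset by blast
next
  case (Suc n)
  have sub: "E \<subseteq> V \<times> V" using dt_sub[OF assms(1)] .
  have "{w \<in> V. dep V E w \<le> Suc n} \<subseteq> {w \<in> V. dep V E w \<le> n} \<union> (\<Union>u\<in>{w \<in> V. dep V E w \<le> n}. Chi E u)"
  proof
    fix w assume w: "w \<in> {w \<in> V. dep V E w \<le> Suc n}"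
    show "w \<in> {w \<in> V. dep V E w \<le> n} \<union> (\<Union>u\<in>{w \<in> V. dep V E w \<le> n}. Chi E u)"
    proof (cases "dep V E w \<le> n")
      case False
      then have "w \<noteq> tree_root V E"
        using tree_dep(2)[OF assms(1,2) tree_basic(1)[OF assms(1,2)], of 0] by auto
      note tp = tree_par[OF assms(1,2) _ this]
      show ?thesis using tp w False unfolding Chi_def by fastforce
    qed (use w in auto)
  qed
  moreover have "finite (\<Union>u\<in>{w \<in> V. dep V E w \<le> n}. Chi E u)"
    using Suc assms(3) unfolding locally_finite_def by auto
  ultimately show ?case using Suc finite_subset by blast
qed




definition ev :: "'v \<Rightarrow> 'v \<Rightarrow> complex" where "ev v = (\<lambda>u. if u = v then 1 else 0)"

lemma fin_l2:
  assumes "finite L" "L \<subseteq> V" "\<forall>y. y \<notin> L \<longrightarrow> f y = 0"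
  shows "f \<in> l2 V"
proof -
  have "(\<lambda>v. (cmod (f v))\<^sup>2) summable_on V \<longleftrightarrow> (\<lambda>v. (cmod (f v))\<^sup>2) summable_on L"
    by (rule summable_on_cong_neutral) (use assms in auto)
  then show ?thesis unfolding l2_def using assms by auto
qed

lemma infsum_fin:
  fixes h :: "'v \<Rightarrow> 'b::{comm_monoid_add, t2_space}"
  assumes "finite L" "L \<subseteq> V" "\<forall>y. y \<notin> L \<longrightarrow> h y = 0"
  shows "infsum h V = sum h L"
proof -
  have "infsum h V = infsum h L"
    by (rule infsum_cong_neutral) (use assms in auto)
  then show ?thesis using assms(1) by simp
qed

locale pt =
  fixes d :: nat and Vs :: "nat \<Rightarrow> 'a set" and Es :: "nat \<Rightarrow> ('a \<times> 'a) set"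
    and lam :: "nat \<Rightarrow> (nat \<Rightarrow> 'a) \<Rightarrow> real"
    and V :: "(nat \<Rightarrow> 'a) set" and S :: "nat \<Rightarrow> ((nat \<Rightarrow> 'a) \<Rightarrow> complex) \<Rightarrow> ((nat \<Rightarrow> 'a) \<Rightarrow> complex)"
  assumes V_eq: "V = prod_vertices d Vs" and S_eq: "S = multishift d Vs Es lam"
    and trees: "\<And>j. j < d \<Longrightarrow> directed_tree (Vs j) (Es j)"
    and rooted: "\<And>j. j < d \<Longrightarrow> has_root (Vs j) (Es j)"
    and loc_fin: "\<And>j. j < d \<Longrightarrow> locally_finite (Vs j) (Es j)"
    and bounded: "\<And>j. j < d \<Longrightarrow> bounded_op V (S j)"
    and commuting: "\<And>i j f. i < d \<Longrightarrow> j < d \<Longrightarrow> f \<in> l2 V \<Longrightarrow> S i (S j f) = S j (S i f)"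
begin

abbreviation rt where "rt j \<equiv> tree_root (Vs j) (Es j)"
definition D where "D j w = dep (Vs j) (Es j) w"
definition tdep where "tdep x = (\<Sum>j<d. D j (x j))"

lemma V_iff: "x \<in> V \<longleftrightarrow> (\<forall>j<d. x j \<in> Vs j) \<and> (\<forall>j\<ge>d. x j = undefined)"
  by (simp add: V_eq prod_vertices_def)

lemma S_apply: "S j f x = (if x \<in> V \<and> x j \<noteq> rt j then complex_of_real (lam j x) * f (par_j Es j x) else 0)"
  by (simp add: S_eq V_eq multishift_def)

lemma par_j_V:
  assumes "j < d" "x \<in> V" "x j \<noteq> rt j"
  shows "par_j Es j x \<in> V" "tdep x = Suc (tdep (par_j Es j x))"
proof -
  have xj: "x j \<in> Vs j" using assms V_iff by auto
  note tp = tree_par[OF trees[OF assms(1)] rooted[OF assms(1)] xj assms(3)]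
  show "par_j Es j x \<in> V" using assms(1,2) tp(1) unfolding V_iff par_j_def by auto
  have jin: "j \<in> {..<d}" using assms(1) by simp
  have "tdep x = D j (x j) + (\<Sum>i\<in>{..<d}-{j}. D i (x i))"
    unfolding tdep_def by (rule sum.remove[OF _ jin]) simp
  moreover have "tdep (par_j Es j x) = D j (par (Es j) (x j)) + (\<Sum>i\<in>{..<d}-{j}. D i (x i))"
  proof -
    have "tdep (par_j Es j x) = D j (par_j Es j x j) + (\<Sum>i\<in>{..<d}-{j}. D i (par_j Es j x i))"
      unfolding tdep_def by (rule sum.remove[OF _ jin]) simp
    moreover have "(\<Sum>i\<in>{..<d}-{j}. D i (par_j Es j x i)) = (\<Sum>i\<in>{..<d}-{j}. D i (x i))"
      by (rule sum.cong) (auto simp: par_j_def)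
    ultimately show ?thesis by (simp add: par_j_def)
  qed
  ultimately show "tdep x = Suc (tdep (par_j Es j x))" using tp(3) by (simp add: D_def)
qed

lemma S_lin: "S j (\<lambda>v. c * a v + f v) = (\<lambda>x. c * S j a x + S j f x)"
  by (rule ext) (simp add: S_apply algebra_simps)

lemma S_zero: "S j (\<lambda>_. 0) = (\<lambda>_. 0)"
  by (rule ext) (simp add: S_apply)

lemma S_sp: "f \<in> sp B \<Longrightarrow> S j f \<in> sp (S j ` B)"
proof (induction f rule: sp.induct)
  case sp0 then show ?case by (simp add: S_zero sp.sp0)
next
  case (spI a f c) then show ?case by (simp add: S_lin sp.spI)
qed

lemma S_l2: "j < d \<Longrightarrow> f \<in> l2 V \<Longrightarrow> S j f \<in> l2 V"
  using bounded unfolding bounded_op_def by blast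

lemma pow_l2: "j < d \<Longrightarrow> f \<in> l2 V \<Longrightarrow> (S j ^^ n) f \<in> l2 V"
  by (induction n) (auto simp: S_l2)

lemma mpow_l2: "k \<le> d \<Longrightarrow> f \<in> l2 V \<Longrightarrow> mpow S \<alpha> k f \<in> l2 V"
proof (induction k arbitrary: f)
  case 0 then show ?case by simp
next
  case (Suc k) then show ?case by (simp add: pow_l2)
qed

lemma comm_pow: "i < d \<Longrightarrow> j < d \<Longrightarrow> f \<in> l2 V \<Longrightarrow> S i ((S j ^^ n) f) = (S j ^^ n) (S i f)"
proof (induction n)
  case 0 then show ?case by simp
next
  case (Suc n)
  have "S i ((S j ^^ Suc n) f) = S j (S i ((S j ^^ n) f))"
    using commuting[OF Suc.prems(1,2) pow_l2[OF Suc.prems(2,3)]] by simp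
  also have "\<dots> = (S j ^^ Suc n) (S i f)" using Suc by simp
  finally show ?case .
qed

lemma comm_mpow: "j < d \<Longrightarrow> k \<le> d \<Longrightarrow> f \<in> l2 V \<Longrightarrow> S j (mpow S \<alpha> k f) = mpow S \<alpha> k (S j f)"
proof (induction k arbitrary: f)
  case 0 then show ?case by simp
next
  case (Suc k)
  have kd: "k < d" using Suc by simp
  have "S j (mpow S \<alpha> (Suc k) f) = S j (mpow S \<alpha> k ((S k ^^ \<alpha> k) f))" by simp
  also have "\<dots> = mpow S \<alpha> k (S j ((S k ^^ \<alpha> k) f))"
    using Suc.IH[OF Suc.prems(1) _ pow_l2[OF kd Suc.prems(3)]] Suc.prems(2) by simp
  also have "\<dots> = mpow S \<alpha> k ((S k ^^ \<alpha> k) (S j f))"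
    using comm_pow[OF Suc.prems(1) kd Suc.prems(3)] by simp
  finally show ?case by simp
qed

lemma mpow_cong: "(\<forall>i<k. \<alpha> i = \<beta> i) \<Longrightarrow> mpow S \<alpha> k = mpow S \<beta> k"
  by (induction k) auto

lemma mpow_zero: "mpow S (\<lambda>_. 0) k = id"
  by (induction k) auto

lemma mpow_shift:
  "j < d \<Longrightarrow> j < k \<Longrightarrow> k \<le> d \<Longrightarrow> f \<in> l2 V \<Longrightarrow>
    mpow S (\<alpha>(j := Suc (\<alpha> j))) k f = mpow S \<alpha> k (S j f)"
proof (induction k arbitrary: f)
  case 0 then show ?case by simp
next
  case (Suc k)
  show ?case
  proof (cases "k = j")
    case True
    have c: "mpow S (\<alpha>(j := Suc (\<alpha> j))) j = mpow S \<alpha> j" by (rule mpow_cong) auto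
    have "mpow S (\<alpha>(j := Suc (\<alpha> j))) (Suc j) f = mpow S (\<alpha>(j := Suc (\<alpha> j))) j ((S j ^^ Suc (\<alpha> j)) f)"
      by simp
    also have "\<dots> = mpow S \<alpha> j ((S j ^^ \<alpha> j) (S j f))"
      unfolding c by (simp only: funpow_Suc_right comp_def)
    also have "\<dots> = mpow S \<alpha> (Suc j) (S j f)" by simp
    finally show ?thesis unfolding True .
  next
    case False
    then have jk: "j < k" using Suc.prems by simp
    have kd: "k < d" using Suc.prems by simp
    have "mpow S (\<alpha>(j := Suc (\<alpha> j))) (Suc k) f = mpow S (\<alpha>(j := Suc (\<alpha> j))) k ((S k ^^ \<alpha> k) f)"
      using False by simp
    also have "\<dots> = mpow S \<alpha> k (S j ((S k ^^ \<alpha> k) f))"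
      by (rule Suc.IH[OF Suc.prems(1) jk _ pow_l2[OF kd Suc.prems(4)]]) (use kd in simp)
    also have "\<dots> = mpow S \<alpha> k ((S k ^^ \<alpha> k) (S j f))"
      using comm_pow[OF Suc.prems(1) kd Suc.prems(4)] by simp
    also have "\<dots> = mpow S \<alpha> (Suc k) (S j f)" by simp
    finally show ?thesis .
  qed
qed

lemma S_mpow: "j < d \<Longrightarrow> f \<in> l2 V \<Longrightarrow> S j (mpow S \<alpha> d f) = mpow S (\<alpha>(j := Suc (\<alpha> j))) d f"
  using comm_mpow[of j d f \<alpha>] mpow_shift[of j d f \<alpha>] by simp

definition A where "A = (\<Union>\<alpha>. mpow S \<alpha> d ` joint_adj_kernel V d S)"

lemma S_A: "j < d \<Longrightarrow> S j ` A \<subseteq> A"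
proof
  fix y assume j: "j < d" and "y \<in> S j ` A"
  then obtain \<alpha> f where f: "f \<in> joint_adj_kernel V d S" "y = S j (mpow S \<alpha> d f)"
    unfolding A_def by blast
  have "f \<in> l2 V" using f(1) unfolding joint_adj_kernel_def by blast
  then have "y = mpow S (\<alpha>(j := Suc (\<alpha> j))) d f" using S_mpow[OF j] f(2) by simp
  then show "y \<in> A" unfolding A_def using f(1) by blast
qed

lemma L_fin: "finite {x \<in> V. tdep x \<le> N}"
proof -
  have "{x \<in> V. tdep x \<le> N} \<subseteq> PiE {..<d} (\<lambda>j. {w \<in> Vs j. D j w \<le> N})"
  proof
    fix x assume x: "x \<in> {x \<in> V. tdep x \<le> N}"
    have "D j (x j) \<le> N" if "j < d" for j
    proof -
      have "D j (x j) \<le> tdep x" unfolding tdep_def by (rule member_le_sum) (use that in auto)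
      then show ?thesis using x by simp
    qed
    then show "x \<in> PiE {..<d} (\<lambda>j. {w \<in> Vs j. D j w \<le> N})"
      using x unfolding PiE_iff extensional_def V_iff by auto
  qed
  moreover have "finite (PiE {..<d} (\<lambda>j. {w \<in> Vs j. D j w \<le> N}))"
    by (rule finite_PiE) (auto simp: D_def intro: tree_finite_levels trees rooted loc_fin)
  ultimately show ?thesis using finite_subset by blast
qed

end



context pt begin

lemma ev_sp_aux: "\<forall>x\<in>V. tdep x = N \<longrightarrow> ev x \<in> sp A"
proof (induction N rule: less_induct)
  case (less N)
  show ?case
  proof (intro ballI impI)
    fix v assume v: "v \<in> V" "tdep v = N"
    define L where "L = {x \<in> V. tdep x = N}"
    define L' where "L' = {u \<in> V. Suc (tdep u) = N}"
    define W where "W = (\<lambda>(j,u). S j (ev u)) ` ({..<d} \<times> L')"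
    have LV: "L \<subseteq> V" unfolding L_def by blast
    have finL: "finite L" using L_fin[of N] by (rule finite_subset[rotated]) (auto simp: L_def)
    have finL': "finite L'" using L_fin[of N] by (rule finite_subset[rotated]) (auto simp: L'_def)
    have finW: "finite W" unfolding W_def using finL' by simp
    obtain ws where ws: "set ws = W" using finite_list[OF finW] by blast
    from gs[OF finL, of ws] obtain w where w: "w \<in> sp W" "\<forall>w'\<in>W. ip L (\<lambda>y. ev v y - w y) w' = 0"
      unfolding ws by blast
    have W_elim: "\<exists>j u. j < d \<and> u \<in> L' \<and> a = S j (ev u)" if "a \<in> W" for a
    proof -
      from that obtain p where p: "p \<in> {..<d} \<times> L'" "a = (\<lambda>(j,u). S j (ev u)) p"
        unfolding W_def by (rule imageE)
      obtain j u where "p = (j,u)" by (cases p)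
      with p have "j < d" "u \<in> L'" "a = S j (ev u)" by simp_all
      then show ?thesis by (intro exI conjI)
    qed
    have WA: "W \<subseteq> sp A"
    proof
      fix a assume "a \<in> W"
      then obtain j u where ju: "j < d" "u \<in> L'" "a = S j (ev u)" using W_elim by blast
      have "ev u \<in> sp A" using less.IH[of "tdep u"] ju(2) unfolding L'_def by auto
      then have "S j (ev u) \<in> sp (S j ` A)" by (rule S_sp)
      then show "a \<in> sp A" using ju sp_mono[OF S_A[OF ju(1)]] by blast
    qed
    have wA: "w \<in> sp A" using sp_sp[OF WA w(1)] .
    have Wsupp: "\<forall>a\<in>W. \<forall>y. y \<notin> L \<longrightarrow> a y = 0"
    proof (intro ballI allI impI)
      fix a y assume "a \<in> W" "y \<notin> L"
      then obtain j u where ju: "j < d" "u \<in> L'" "a = S j (ev u)" using W_elim by blast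
      show "a y = 0"
      proof (rule ccontr)
        assume "a y \<noteq> 0"
        then have y: "y \<in> V" "y j \<noteq> rt j" "par_j Es j y = u"
          using ju(3) by (auto simp: S_apply ev_def split: if_splits)
        have "tdep y = N" using par_j_V[OF ju(1) y(1,2)] y(3) ju(2) unfolding L'_def by simp
        with y(1) \<open>y \<notin> L\<close> show False unfolding L_def by blast
      qed
    qed
    define r where "r = (\<lambda>y. ev v y - w y)"
    have rsupp: "\<forall>y. y \<notin> L \<longrightarrow> r y = 0"
    proof (intro allI impI)
      fix y assume y: "y \<notin> L"
      have "w y = 0" by (rule sp_support[OF Wsupp w(1) y])
      moreover have "y \<noteq> v" using y v unfolding L_def by blast
      ultimately show "r y = 0" unfolding r_def ev_def by simp
    qed
    have r_l2: "r \<in> l2 V" by (rule fin_l2[OF finL LV rsupp])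
    have r_orth: "l2inner V (S j g) r = 0" if j: "j < d" for j g
    proof -
      have "l2inner V (S j g) r = (\<Sum>y\<in>L. S j g y * cnj (r y))"
        unfolding l2inner_def by (rule infsum_fin[OF finL LV]) (use rsupp in simp)
      also have "\<dots> = ip L (\<lambda>y. \<Sum>u\<in>L'. g u * S j (ev u) y) r"
        unfolding ip_def
      proof (rule sum.cong[OF refl])
        fix y assume yL: "y \<in> L"
        have "S j g y = (\<Sum>u\<in>L'. g u * S j (ev u) y)"
        proof (cases "y \<in> V \<and> y j \<noteq> rt j")
          case True
          define p where "p = par_j Es j y"
          have pL': "p \<in> L'" using par_j_V[OF j] True yL unfolding p_def L'_def L_def by auto
          have "(\<Sum>u\<in>L'. g u * S j (ev u) y) = (\<Sum>u\<in>L'. if u = p then g p * complex_of_real (lam j y) else 0)"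
            by (rule sum.cong[OF refl]) (use True in \<open>auto simp: S_apply ev_def p_def\<close>)
          also have "\<dots> = g p * complex_of_real (lam j y)" using finL' pL' by simp
          finally show ?thesis using True by (simp add: S_apply p_def)
        next
          case False
          then have "S j g y = 0" "\<And>u. S j (ev u) y = 0" unfolding S_apply by auto
          then show ?thesis by simp
        qed
        then show "S j g y * cnj (r y) = (\<Sum>u\<in>L'. g u * S j (ev u) y) * cnj (r y)" by simp
      qed
      also have "\<dots> = (\<Sum>u\<in>L'. g u * ip L (S j (ev u)) r)"
      proof -
        have "ip L (\<lambda>y. \<Sum>u\<in>L'. g u * S j (ev u) y) r = (\<Sum>y\<in>L. \<Sum>u\<in>L'. g u * (S j (ev u) y * cnj (r y)))"
          unfolding ip_def by (simp add: sum_distrib_right mult.assoc)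
        also have "\<dots> = (\<Sum>u\<in>L'. \<Sum>y\<in>L. g u * (S j (ev u) y * cnj (r y)))"
          by (rule sum.swap)
        also have "\<dots> = (\<Sum>u\<in>L'. g u * ip L (S j (ev u)) r)"
          unfolding ip_def by (simp add: sum_distrib_left)
        finally show ?thesis .
      qed
      also have "\<dots> = 0"
      proof (rule sum.neutral, rule ballI)
        fix u assume u: "u \<in> L'"
        have "S j (ev u) \<in> W" unfolding W_def by (rule image_eqI[where x="(j,u)"]) (use u j in auto)
        then have "ip L r (S j (ev u)) = 0" using w(2) unfolding r_def by blast
        then have "ip L (S j (ev u)) r = 0" by (simp add: ip_cnj[of L "S j (ev u)" r])
        then show "g u * ip L (S j (ev u)) r = 0" by simp
      qed
      finally show ?thesis .
    qed
    have r_E: "r \<in> joint_adj_kernel V d S"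
      unfolding joint_adj_kernel_def
    proof (intro CollectI conjI allI impI r_l2)
      fix j assume j: "j < d"
      have zl2: "(\<lambda>_. 0) \<in> l2 V" by (rule fin_l2[of "{}"]) auto
      show "adj V (S j) r = (\<lambda>_. 0)"
        unfolding adj_def
      proof (rule the_equality)
        show "(\<lambda>_. 0) \<in> l2 V \<and> (\<forall>g\<in>l2 V. l2inner V (S j g) r = l2inner V g (\<lambda>_. 0))"
          using zl2 r_orth[OF j] by (simp add: l2inner_def)
      next
        fix h assume h: "h \<in> l2 V \<and> (\<forall>g\<in>l2 V. l2inner V (S j g) r = l2inner V g h)"
        show "h = (\<lambda>_. 0)"
        proof
          fix y
          show "h y = 0"
          proof (cases "y \<in> V")
            case True
            have el2: "ev y \<in> l2 V" by (rule fin_l2[of "{y}"]) (use True in \<open>auto simp: ev_def\<close>)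
            have "l2inner V (ev y) h = (\<Sum>x\<in>{y}. ev y x * cnj (h x))"
              unfolding l2inner_def by (rule infsum_fin) (use True in \<open>auto simp: ev_def\<close>)
            then have "l2inner V (ev y) h = cnj (h y)" by (simp add: ev_def)
            moreover have "l2inner V (ev y) h = 0" using h el2 r_orth[OF j] by metis
            ultimately show ?thesis by simp
          next
            case False then show ?thesis using h unfolding l2_def by blast
          qed
        qed
      qed
    qed
    have "r \<in> A" unfolding A_def using r_E mpow_zero[of d] by (metis UNIV_I UN_I id_apply image_eqI)
    then have "r \<in> sp A" by (rule sp_base)
    moreover have "ev v = (\<lambda>y. w y + r y)" unfolding r_def by simp
    ultimately show "ev v \<in> sp A" using sp_add[OF wA] by simp
  qed
qed

lemma ev_sp: "x \<in> V \<Longrightarrow> ev x \<in> sp A"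
  using ev_sp_aux by blast

lemma main_eq: "l2 V = closed_span V A"
proof
  show "closed_span V A \<subseteq> l2 V" unfolding closed_span_def by blast
next
  show "l2 V \<subseteq> closed_span V A"
  proof
    fix f assume f: "f \<in> l2 V"
    define q where "q = (\<lambda>v. (cmod (f v))\<^sup>2)"
    have qs: "q summable_on V" using f unfolding l2_def q_def by blast
    have "\<exists>g\<in>lin_span A. l2norm V (\<lambda>v. f v - g v) < e" if e: "e > 0" for e
    proof -
      have e2: "e\<^sup>2 / 2 > 0" using e by simp
      obtain F where F: "finite F" "F \<subseteq> V" "dist (sum q F) (infsum q V) \<le> e\<^sup>2 / 2"
        using infsum_finite_approximation[OF qs e2] by blast
      define g where "g = (\<lambda>y. \<Sum>v\<in>F. f v * ev v y)"
      have gsp: "g \<in> sp A" unfolding g_def by (rule sp_sum[OF F(1)]) (use F(2) ev_sp in blast)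
      have gv: "g y = (if y \<in> F then f y else 0)" for y
        unfolding g_def ev_def using F(1) by (simp add: if_distrib cong: if_cong)
      have "infsum (\<lambda>v. (cmod (f v - g v))\<^sup>2) V = infsum q (V - F)"
        by (rule infsum_cong_neutral) (auto simp: gv q_def)
      also have "\<dots> = infsum q V - infsum q F"
        by (rule infsum_Diff[OF qs _ F(2)]) (use F(1) in simp)
      also have "\<dots> = infsum q V - sum q F" using F(1) by simp
      also have "\<dots> \<le> e\<^sup>2 / 2" using abs_le_D2[OF F(3)[unfolded dist_real_def]] by simp
      also have "\<dots> < e\<^sup>2" using e by simp
      finally have lt: "infsum (\<lambda>v. (cmod (f v - g v))\<^sup>2) V < e\<^sup>2" .
      have "l2norm V (\<lambda>v. f v - g v) < sqrt (e\<^sup>2)"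
        unfolding l2norm_def using lt by (simp only: real_sqrt_less_iff)
      then have "l2norm V (\<lambda>v. f v - g v) < e" using e by simp
      then show ?thesis using sp_lin[OF gsp] by blast
    qed
    then show "f \<in> closed_span V A" unfolding closed_span_def using f by blast
  qed
qed

end


theorem mainTheorem1:
  fixes d :: nat
    and Vs :: "nat \<Rightarrow> 'a set" and Es :: "nat \<Rightarrow> ('a \<times> 'a) set"
    and lam :: "nat \<Rightarrow> (nat \<Rightarrow> 'a) \<Rightarrow> real"
  defines "V \<equiv> prod_vertices d Vs"
    and "S \<equiv> multishift d Vs Es lam"
  assumes trees: "\<And>j. j < d \<Longrightarrow> directed_tree (Vs j) (Es j)"
    and rooted: "\<And>j. j < d \<Longrightarrow> has_root (Vs j) (Es j)"
    and loc_fin: "\<And>j. j < d \<Longrightarrow> locally_finite (Vs j) (Es j)"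
    and leafless: "\<And>j. j < d \<Longrightarrow> leafless (Vs j) (Es j)"
    and V_count: "countable V" and V_inf: "infinite V"
    and lam_pos: "\<And>j v. j < d \<Longrightarrow> v \<in> V \<Longrightarrow> v \<noteq> prod_root d Vs Es \<Longrightarrow> lam j v > 0"
    and bounded: "\<And>j. j < d \<Longrightarrow> bounded_op V (S j)"
    and commuting: "\<And>i j f. i < d \<Longrightarrow> j < d \<Longrightarrow> f \<in> l2 V \<Longrightarrow> S i (S j f) = S j (S i f)"
  shows "l2 V = closed_span V (\<Union>\<alpha>. mpow S \<alpha> d ` joint_adj_kernel V d S)"
proof -
  interpret pt d Vs Es lam V S
  proof unfold_locales
    show "V = prod_vertices d Vs" by (simp add: V_def)
    show "S = multishift d Vs Es lam" by (simp add: S_def)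
  qed (fact trees rooted loc_fin bounded commuting)+
  show ?thesis using main_eq unfolding A_def .
qed

end
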